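(* Let $T:X\to Y$ be an injective linear operator between Archimedean vector lattices, and assume that $X$ has sufficiently many components. If $T$ is disjointness preserving, then the inverse $T^{-1}:TX\to X$ satisfies condition $(\beta)$, i.e. for $y,y_0\in TX$ with $y\in\{y_0\}^{dd}$ (band taken in $Y$) we have $T^{-1}y\in\{T^{-1}y_0\}^{dd}$ (band taken in $X$).
   Context: All vector lattices are Archimedean. For a subset $A$ of a vector lattice $X$, $A^d=\{x\in X: |x|\wedge|a|=0 \text{ for all } a\in A\}$ and $A^{dd}=(A^d)^d$. For $a,b\in X$ we write $a\lhd b$ if $\{a\}^{dd}\subseteq\{b\}^{dd}$. A linear operator $S$ satisfies condition $(\beta)$ if $Sa\lhd Sb$ whenever $a\lhd b$. A linear operator is disjointness preserving if it maps disjoint elements to disjoint elements. An element $x'$ is a component of $x$ if $|x'|\wedge|x-x'|=0$. A vector lattice $X$ has sufficiently many components if whenever $x,u\in X$ with $x\notin\{u\}^{dd}$, there exists a nonzero component $x'$ of $x$ with $|x'|\wedge|u|=0$. *)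

theory Defs
  imports Complex_Main
begin

class vector_lattice = ordered_real_vector + lattice

class archimedean_vector_lattice = vector_lattice +
  assumes archimedean: "0 \<le> x \<Longrightarrow> (\<forall>n::nat. of_nat n *\<^sub>R x \<le> y) \<Longrightarrow> x = 0"

definition vabs :: "'a::vector_lattice \<Rightarrow> 'a" where
  "vabs x = sup x (- x)"

definition disj :: "'a::vector_lattice \<Rightarrow> 'a \<Rightarrow> bool" where
  "disj x y \<longleftrightarrow> inf (vabs x) (vabs y) = 0"

definition dcompl :: "'a::vector_lattice set \<Rightarrow> 'a set" where
  "dcompl A = {x. \<forall>a\<in>A. disj x a}"

definition band :: "'a::vector_lattice \<Rightarrow> 'a set" where
  "band x = dcompl (dcompl {x})"

definition component :: "'a::vector_lattice \<Rightarrow> 'a \<Rightarrow> bool" where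
  "component x' x \<longleftrightarrow> disj x' (x - x')"

definition suff_many_components :: "'a::vector_lattice itself \<Rightarrow> bool" where
  "suff_many_components _ \<longleftrightarrow>
     (\<forall>x u::'a. x \<notin> band u \<longrightarrow> (\<exists>x'. component x' x \<and> x' \<noteq> 0 \<and> disj x' u))"

definition disjointness_preserving :: "('a::vector_lattice \<Rightarrow> 'b::vector_lattice) \<Rightarrow> bool" where
  "disjointness_preserving T \<longleftrightarrow> (\<forall>a b. disj a b \<longrightarrow> disj (T a) (T b))"

end

theory Submission
  imports Defs
begin

lemma vabs_ge: "(x::'a::vector_lattice) \<le> vabs x" "- x \<le> vabs x"
  by (simp_all add: vabs_def)

lemma vabs_nonneg: "0 \<le> vabs (x::'a::vector_lattice)"
proof -
  have "0 \<le> vabs x + vabs x" using add_mono[OF vabs_ge(1)[of x] vabs_ge(2)[of x]] by simp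
  then have "0 \<le> (1/2::real) *\<^sub>R (vabs x + vabs x)" by (rule scaleR_nonneg_nonneg[rotated]) simp
  also have "(1/2::real) *\<^sub>R (vabs x + vabs x) = vabs x"
    by (simp add: scaleR_2[symmetric])
  finally show ?thesis .
qed

lemma vabs_zero: "vabs (x::'a::vector_lattice) = 0 \<Longrightarrow> x = 0"
  using vabs_ge[of x] by (metis antisym neg_le_0_iff_le)

lemma vabs_tri: "vabs ((u::'a::vector_lattice) - v) \<le> vabs u + vabs v"
proof -
  have "u - v \<le> vabs u + vabs v"
    using add_mono[OF vabs_ge(1)[of u] vabs_ge(2)[of v]] by simp
  moreover have "- (u - v) \<le> vabs u + vabs v"
    using add_mono[OF vabs_ge(2)[of u] vabs_ge(1)[of v]] by simp
  ultimately show ?thesis by (simp add: vabs_def)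
qed

lemma inf_add_le:
  fixes a b c :: "'a::vector_lattice"
  assumes "0 \<le> a" "0 \<le> b" "0 \<le> c"
  shows "inf a (b + c) \<le> inf a b + inf a c"
proof -
  define d where "d = inf a (b + c)"
  have da: "d \<le> a" and dbc: "d \<le> b + c" by (simp_all add: d_def)
  have iac: "0 \<le> inf a c" using assms by simp
  have "d - b \<le> a" using da assms(2) by (metis add_increasing2 diff_add_cancel le_diff_eq)
  moreover have "d - b \<le> c" using dbc by (simp add: diff_le_eq add.commute)
  ultimately have "d - b \<le> inf a c" by simp
  then have 1: "d - inf a c \<le> b" by (metis diff_le_eq le_diff_eq add.commute)
  have "d \<le> a + inf a c" using da iac by (metis add_increasing2)
  then have 2: "d - inf a c \<le> a" by (simp add: diff_le_eq)
  from 1 2 have "d - inf a c \<le> inf a b" by simp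
  then have "d \<le> inf a b + inf a c" by (simp only: diff_le_eq)
  then show ?thesis unfolding d_def .
qed

lemma disj_sym: "disj a b = disj b a"
  by (simp add: disj_def inf_commute)

lemma disj_zero:
  fixes z u v :: "'a::vector_lattice"
  assumes "disj z u" "disj z (u - z)"
  shows "z = 0"
proof -
  let ?p = "vabs z"
  have "vabs (u - (u - z)) \<le> vabs u + vabs (u - z)" by (rule vabs_tri)
  then have "?p \<le> vabs u + vabs (u - z)" by simp
  then have "?p \<le> inf ?p (vabs u + vabs (u - z))" by simp
  also have "\<dots> \<le> inf ?p (vabs u) + inf ?p (vabs (u - z))"
    by (rule inf_add_le) (simp_all add: vabs_nonneg)
  also have "\<dots> = 0" using assms by (simp add: disj_def)
  finally have "?p \<le> 0" .
  then have "?p = 0" using vabs_nonneg[of z] by simp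
  then show ?thesis by (rule vabs_zero)
qed

theorem theorem3p2:
  fixes T :: "'a::archimedean_vector_lattice \<Rightarrow> 'b::archimedean_vector_lattice"
  assumes "linear T"
    and "inj T"
    and "suff_many_components TYPE('a)"
    and "disjointness_preserving T"
  shows "\<forall>y\<in>range T. \<forall>y0\<in>range T. y \<in> band y0 \<longrightarrow> inv T y \<in> band (inv T y0)"
proof (intro ballI impI)
  fix y y0 assume "y \<in> range T" "y0 \<in> range T" and yb: "y \<in> band y0"
  then obtain x x0 where y: "y = T x" and y0: "y0 = T x0" by blast
  have ix: "inv T y = x" "inv T y0 = x0" using assms(2) y y0 by (simp_all add: inv_f_f)
  show "inv T y \<in> band (inv T y0)"
  proof (rule ccontr)
    assume "inv T y \<notin> band (inv T y0)"
    then have "x \<notin> band x0" using ix by simp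
    then obtain x' where c: "component x' x" and nz: "x' \<noteq> 0" and d: "disj x' x0"
      using assms(3) unfolding suff_many_components_def by blast
    have d1: "disj (T x') (T x0)" using d assms(4) by (simp add: disjointness_preserving_def)
    have "disj (T x') (T (x - x'))" using c assms(4)
      by (simp add: disjointness_preserving_def component_def)
    then have d2: "disj (T x') (T x - T x')" using assms(1) by (simp add: linear_diff)
    have "T x' \<in> dcompl {T x0}" using d1 by (simp add: dcompl_def)
    then have "disj (T x) (T x')" using yb y y0 by (simp add: band_def dcompl_def)
    then have d3: "disj (T x') (T x)" by (simp add: disj_sym)
    have "T x' = 0" by (rule disj_zero[OF d3 d2])
    then have "T x' = T 0" using assms(1) by (simp add: linear_0)
    then have "x' = 0" using assms(2) by (simp add: inj_eq)
    with nz show False by simp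
  qed
qed

end
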